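(* Let $\beta>1$, $l\in(-1,0]$, $r=l+1$, let $T$ be the $(-\beta,l)$-transformation and $d$ the $(-\beta,l)$-expansion, and put $d^*(l)=\lim_{\varepsilon\to0+}d(l+\varepsilon)$ and $d^*(r)=\lim_{\varepsilon\to0+}d(r-\varepsilon)$. If $T^q(l)\neq l$ for all $q\in\mathbb{N}$, or if the equality $T^q(l)=l$ holds only for even $q\in\mathbb{N}$, then $d^*(l)=d(l)$. If on the other hand $T^q(l)=l$ for some odd $q\in\mathbb{N}$, so that $d(l)=(l_1l_2\cdots l_{q-1}l_q)^\omega$, then $$d^*(l)=l_1l_2\cdots l_{q-1}(l_q-1)\,d^*(r).$$
   Context: For $\beta>1$ and $l\in(-1,0]$, $r=l+1$, the $(-\beta,l)$-transformation is $T:[l,r)\to[l,r)$, $T(x)=-\beta x-\lfloor -\beta x-l\rfloor$. The $(-\beta,l)$-expansion of $x\in[l,r)$ is the integer sequence $d(x)=x_1x_2x_3\cdots$ with $x_i=\lfloor -\beta T^{i-1}(x)-l\rfloor$. Limits of sequences are in the product topology (digits lie in a finite set); these one-sided limits exist. $w^\omega$ is the infinite repetition of the word $w$; juxtaposition denotes concatenation. *)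

theory Defs
  imports "HOL-Analysis.Analysis"
begin

definition negT :: "real \<Rightarrow> real \<Rightarrow> real \<Rightarrow> real" where
  "negT \<beta> l x = - \<beta> * x - of_int \<lfloor>- \<beta> * x - l\<rfloor>"

text \<open>The (-beta,l)-expansion d(x) = x_1 x_2 ..., indexed from 0:
  dexp beta l x n = x_(n+1) = floor(-beta T^n(x) - l).
  Sequences nat => int carry the product topology (Function_Topology).\<close>
definition dexp :: "real \<Rightarrow> real \<Rightarrow> real \<Rightarrow> nat \<Rightarrow> int" where
  "dexp \<beta> l x n = \<lfloor>- \<beta> * ((negT \<beta> l ^^ n) x) - l\<rfloor>"

end

theory Submission imports Defs begin

lemma comp_tendsto:
  fixes f :: "'a \<Rightarrow> nat \<Rightarrow> int"
  assumes "\<And>n. ((\<lambda>x. f x n) \<longlongrightarrow> g n) F"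
  shows "(f \<longlongrightarrow> g) F"
proof -
  have "limitin (product_topology (\<lambda>i. euclidean) UNIV) f g F"
    unfolding limitin_componentwise using assms by simp
  then show ?thesis by (metis euclidean_product_topology limitin_canonical_iff)
qed

definition side :: "bool \<Rightarrow> real \<Rightarrow> real filter" where
  "side b y = (if b then at_right y else at_left y)"

context fixes \<beta> l :: real assumes bpos: "\<beta> > 0"
begin

lemma negT_alt: "negT \<beta> l x = l + ((-\<beta>*x - l) - of_int \<lfloor>-\<beta>*x - l\<rfloor>)"
  unfolding negT_def by simp

lemma negT_eq_l: "negT \<beta> l y = l \<longleftrightarrow> (-\<beta>*y - l) \<in> \<int>"
  unfolding negT_alt by (metis add_cancel_left_right eq_iff_diff_eq_0 floor_of_int Ints_cases Ints_of_int)

lemma dexp_Suc: "dexp \<beta> l x (Suc n) = dexp \<beta> l (negT \<beta> l x) n"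
  unfolding dexp_def by (simp add: funpow_Suc_right del: funpow.simps)

lemma dexp_0: "dexp \<beta> l x 0 = \<lfloor>-\<beta>*x - l\<rfloor>"
  unfolding dexp_def by simp

lemma stepC:
  "eventually (\<lambda>x. \<lfloor>-\<beta>*x - l\<rfloor> = \<lfloor>-\<beta>*y - l\<rfloor>) (at_left y) \<and>
   filterlim (negT \<beta> l) (at_right (negT \<beta> l y)) (at_left y)"
proof -
  define k where "k = \<lfloor>-\<beta>*y - l\<rfloor>"
  have k1: "of_int k \<le> -\<beta>*y - l" "-\<beta>*y - l < of_int k + 1" unfolding k_def by linarith+
  define d where "d = (of_int k + 1 - (-\<beta>*y - l)) / \<beta>"
  have dpos: "d > 0" unfolding d_def using k1 bpos by simp
  have ev: "eventually (\<lambda>x. y - d < x \<and> x < y) (at_left y)"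
    unfolding eventually_at_left_field using dpos by (intro exI[of _ "y-d"]) auto
  have fl: "\<lfloor>-\<beta>*x - l\<rfloor> = k" if "y - d < x" "x < y" for x
  proof -
    have a: "-\<beta>*x > -\<beta>*y" using that bpos by simp
    have "\<beta>*(y - x) < \<beta>*d" using that bpos by simp
    moreover have "\<beta>*d = of_int k + 1 - (-\<beta>*y - l)" unfolding d_def using bpos by simp
    ultimately have "-\<beta>*x - l < of_int k + 1" by (simp add: algebra_simps)
    with a show ?thesis using k1 by linarith
  qed
  have e1: "eventually (\<lambda>x. \<lfloor>-\<beta>*x - l\<rfloor> = k) (at_left y)"
    using ev by eventually_elim (use fl in auto)
  have e2: "eventually (\<lambda>x. negT \<beta> l x = l + ((-\<beta>*x - l) - of_int k)) (at_left y)"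
    using e1 by eventually_elim (simp add: negT_alt)
  have "((\<lambda>x. l + ((-\<beta>*x - l) - of_int k)) \<longlongrightarrow> l + ((-\<beta>*y - l) - of_int k)) (at_left y)"
    by (intro tendsto_intros)
  hence "((\<lambda>x. l + ((-\<beta>*x - l) - of_int k)) \<longlongrightarrow> negT \<beta> l y) (at_left y)"
    by (simp add: negT_alt k_def)
  moreover have "eventually (\<lambda>x. l + ((-\<beta>*x - l) - of_int k) = negT \<beta> l x) (at_left y)"
    using e2 by eventually_elim simp
  ultimately have t: "(negT \<beta> l \<longlongrightarrow> negT \<beta> l y) (at_left y)"
    by (rule Lim_transform_eventually)
  have ny: "negT \<beta> l y = l + ((-\<beta>*y - l) - of_int k)" by (simp add: negT_alt k_def)
  have "eventually (\<lambda>x. negT \<beta> l x \<in> {negT \<beta> l y<..}) (at_left y)"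
    using e2 ev
  proof eventually_elim
    case (elim x)
    have "\<beta>*x < \<beta>*y" using elim bpos by simp
    then show ?case using elim ny by simp
  qed
  with t have "filterlim (negT \<beta> l) (at_right (negT \<beta> l y)) (at_left y)"
    unfolding filterlim_at by (auto elim: eventually_mono)
  then show ?thesis using e1 k_def by simp
qed

lemma genR:
  assumes dpos: "d > 0" and fl: "\<And>x. y < x \<Longrightarrow> x < y + d \<Longrightarrow> \<lfloor>-\<beta>*x - l\<rfloor> = k"
  shows "eventually (\<lambda>x. \<lfloor>-\<beta>*x - l\<rfloor> = k) (at_right y) \<and>
   filterlim (negT \<beta> l) (at_left (l + ((-\<beta>*y - l) - of_int k))) (at_right y)"
proof -
  have ev: "eventually (\<lambda>x. y < x \<and> x < y + d) (at_right y)"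
    unfolding eventually_at_right_field using dpos by (intro exI[of _ "y+d"]) auto
  have e1: "eventually (\<lambda>x. \<lfloor>-\<beta>*x - l\<rfloor> = k) (at_right y)"
    using ev by eventually_elim (use fl in auto)
  have e2: "eventually (\<lambda>x. negT \<beta> l x = l + ((-\<beta>*x - l) - of_int k)) (at_right y)"
    using e1 by eventually_elim (simp add: negT_alt)
  have "((\<lambda>x. l + ((-\<beta>*x - l) - of_int k)) \<longlongrightarrow> l + ((-\<beta>*y - l) - of_int k)) (at_right y)"
    by (intro tendsto_intros)
  moreover have "eventually (\<lambda>x. l + ((-\<beta>*x - l) - of_int k) = negT \<beta> l x) (at_right y)"
    using e2 by eventually_elim simp
  ultimately have t: "(negT \<beta> l \<longlongrightarrow> l + ((-\<beta>*y - l) - of_int k)) (at_right y)"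
    by (rule Lim_transform_eventually)
  have "eventually (\<lambda>x. negT \<beta> l x \<in> {..<l + ((-\<beta>*y - l) - of_int k)}) (at_right y)"
    using e2 ev
  proof eventually_elim
    case (elim x)
    have "\<beta>*y < \<beta>*x" using elim bpos by simp
    then show ?case using elim by simp
  qed
  with t have "filterlim (negT \<beta> l) (at_left (l + ((-\<beta>*y - l) - of_int k))) (at_right y)"
    unfolding filterlim_at by (auto elim: eventually_mono)
  then show ?thesis using e1 by simp
qed

lemma stepA:
  assumes "negT \<beta> l y \<noteq> l"
  shows "eventually (\<lambda>x. \<lfloor>-\<beta>*x - l\<rfloor> = \<lfloor>-\<beta>*y - l\<rfloor>) (at_right y) \<and>
   filterlim (negT \<beta> l) (at_left (negT \<beta> l y)) (at_right y)"
proof -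
  define k where "k = \<lfloor>-\<beta>*y - l\<rfloor>"
  have ni: "-\<beta>*y - l \<notin> \<int>" using assms negT_eq_l by blast
  have k1: "of_int k < -\<beta>*y - l"
    unfolding k_def using ni by (metis Ints_of_int of_int_floor_le order_le_less)
  define d where "d = ((-\<beta>*y - l) - of_int k) / \<beta>"
  have dpos: "d > 0" unfolding d_def using k1 bpos by simp
  have fl: "\<lfloor>-\<beta>*x - l\<rfloor> = k" if "y < x" "x < y + d" for x
  proof -
    have a: "-\<beta>*x < -\<beta>*y" using that bpos by simp
    have "\<beta>*(x - y) < \<beta>*d" using that bpos by simp
    moreover have "\<beta>*d = (-\<beta>*y - l) - of_int k" unfolding d_def using bpos by simp
    ultimately have "-\<beta>*x - l > of_int k" by (simp add: algebra_simps)
    with a show ?thesis unfolding k_def by linarith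
  qed
  from genR[where y=y, OF dpos fl] show ?thesis by (simp add: negT_alt k_def)
qed

lemma stepB:
  assumes "negT \<beta> l y = l"
  shows "eventually (\<lambda>x. \<lfloor>-\<beta>*x - l\<rfloor> = \<lfloor>-\<beta>*y - l\<rfloor> - 1) (at_right y) \<and>
   filterlim (negT \<beta> l) (at_left (l + 1)) (at_right y)"
proof -
  define k where "k = \<lfloor>-\<beta>*y - l\<rfloor>"
  have ni: "-\<beta>*y - l \<in> \<int>" using assms negT_eq_l by blast
  have k1: "of_int k = -\<beta>*y - l"
    unfolding k_def using ni by (metis Ints_cases floor_of_int)
  define d where "d = 1 / \<beta>"
  have dpos: "d > 0" unfolding d_def using bpos by simp
  have fl: "\<lfloor>-\<beta>*x - l\<rfloor> = k - 1" if "y < x" "x < y + d" for x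
  proof -
    have a: "-\<beta>*x < -\<beta>*y" using that bpos by simp
    have "\<beta>*(x - y) < \<beta>*d" using that bpos by simp
    moreover have "\<beta>*d = 1" unfolding d_def using bpos by simp
    ultimately have "-\<beta>*x - l > of_int k - 1" using k1 by (simp add: algebra_simps)
    with a k1 show ?thesis by linarith
  qed
  have e: "l + ((-\<beta>*y - l) - of_int (k - 1)) = l + 1" using k1 by simp
  have g: "eventually (\<lambda>x. \<lfloor>-\<beta>*x - l\<rfloor> = k - 1) (at_right y) \<and>
   filterlim (negT \<beta> l) (at_left (l + ((-\<beta>*y - l) - of_int (k - 1)))) (at_right y)"
    by (rule genR[OF dpos fl])
  show ?thesis using g[unfolded e] k_def by simp
qed

lemma side_step:
  assumes "b \<longrightarrow> negT \<beta> l y \<noteq> l"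
  shows "filterlim (negT \<beta> l) (side (\<not>b) (negT \<beta> l y)) (side b y) \<and>
         eventually (\<lambda>x. dexp \<beta> l x 0 = dexp \<beta> l y 0) (side b y)"
  using stepA[of y] stepC[of y] assms by (cases b) (auto simp: side_def dexp_0)

lemma side_stepB:
  assumes "negT \<beta> l y = l"
  shows "filterlim (negT \<beta> l) (at_left (l+1)) (at_right y) \<and>
         eventually (\<lambda>x. dexp \<beta> l x 0 = dexp \<beta> l y 0 - 1) (at_right y)"
  using stepB[OF assms] by (simp add: dexp_0)

lemma Tj_Suc: "(negT \<beta> l ^^ Suc j) y = (negT \<beta> l ^^ j) (negT \<beta> l y)"
  by (simp add: funpow_Suc_right del: funpow.simps)

lemma lemG:
  "\<forall>y b. (\<forall>j\<le>n. b = even j \<longrightarrow> negT \<beta> l ((negT \<beta> l ^^ j) y) \<noteq> l) \<longrightarrow>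
     eventually (\<lambda>x. dexp \<beta> l x n = dexp \<beta> l y n) (side b y)"
proof (induction n)
  case 0
  then show ?case using side_step by auto
next
  case (Suc n)
  show ?case
  proof (intro allI impI)
    fix y b assume h: "\<forall>j\<le>Suc n. b = even j \<longrightarrow> negT \<beta> l ((negT \<beta> l ^^ j) y) \<noteq> l"
    have s: "filterlim (negT \<beta> l) (side (\<not>b) (negT \<beta> l y)) (side b y)"
      using side_step[of b y] h[rule_format, of 0] by auto
    have "\<forall>j\<le>n. (\<not>b) = even j \<longrightarrow> negT \<beta> l ((negT \<beta> l ^^ j) (negT \<beta> l y)) \<noteq> l"
    proof (intro allI impI)
      fix j assume "j \<le> n" "(\<not>b) = even j"
      then show "negT \<beta> l ((negT \<beta> l ^^ j) (negT \<beta> l y)) \<noteq> l"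
        using h[rule_format, of "Suc j"] Tj_Suc[of j y] by auto
    qed
    with Suc.IH have "eventually (\<lambda>x. dexp \<beta> l x n = dexp \<beta> l (negT \<beta> l y) n) (side (\<not>b) (negT \<beta> l y))"
      by blast
    from eventually_compose_filterlim[OF this s]
    show "eventually (\<lambda>x. dexp \<beta> l x (Suc n) = dexp \<beta> l y (Suc n)) (side b y)"
      by (simp add: dexp_Suc)
  qed
qed

lemma lemE:
  "\<forall>y b. \<exists>c. eventually (\<lambda>x. dexp \<beta> l x n = c) (side b y)"
proof (induction n)
  case 0
  show ?case
  proof (intro allI)
    fix y b
    show "\<exists>c. eventually (\<lambda>x. dexp \<beta> l x 0 = c) (side b y)"
      using side_step[of b y] side_stepB[of y] by (cases "b \<and> negT \<beta> l y = l") (auto simp: side_def)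
  qed
next
  case (Suc n)
  show ?case
  proof (intro allI)
    fix y b
    show "\<exists>c. eventually (\<lambda>x. dexp \<beta> l x (Suc n) = c) (side b y)"
    proof (cases "b \<and> negT \<beta> l y = l")
      case True
      then have s: "filterlim (negT \<beta> l) (side False (l+1)) (side b y)"
        using side_stepB[of y] by (auto simp: side_def)
      obtain c where "eventually (\<lambda>x. dexp \<beta> l x n = c) (side False (l+1))" using Suc.IH by blast
      from eventually_compose_filterlim[OF this s] show ?thesis by (auto simp: dexp_Suc)
    next
      case False
      then have s: "filterlim (negT \<beta> l) (side (\<not>b) (negT \<beta> l y)) (side b y)"
        using side_step[of b y] by auto
      obtain c where "eventually (\<lambda>x. dexp \<beta> l x n = c) (side (\<not>b) (negT \<beta> l y))" using Suc.IH by blast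
      from eventually_compose_filterlim[OF this s] show ?thesis by (auto simp: dexp_Suc)
    qed
  qed
qed

lemma lemH:
  "\<forall>y b. (\<forall>j<m. b = even j \<longrightarrow> negT \<beta> l ((negT \<beta> l ^^ j) y) \<noteq> l) \<longrightarrow> b = even m \<longrightarrow>
     negT \<beta> l ((negT \<beta> l ^^ m) y) = l \<longrightarrow>
     eventually (\<lambda>x. dexp \<beta> l x m = dexp \<beta> l y m - 1) (side b y) \<and>
     (\<forall>k c. eventually (\<lambda>z. dexp \<beta> l z k = c) (at_left (l+1)) \<longrightarrow>
        eventually (\<lambda>x. dexp \<beta> l x (m+1+k) = c) (side b y))"
proof (induction m)
  case 0
  show ?case
  proof (intro allI impI conjI)
    fix y :: real and b :: bool
    assume b: "b = even (0::nat)" and e: "negT \<beta> l ((negT \<beta> l ^^ 0) y) = l"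
    then have bb: "b" and e': "negT \<beta> l y = l" by auto
    show "eventually (\<lambda>x. dexp \<beta> l x 0 = dexp \<beta> l y 0 - 1) (side b y)"
      using side_stepB[OF e'] bb by (simp add: side_def)
    fix k c assume ev: "eventually (\<lambda>z. dexp \<beta> l z k = c) (at_left (l+1))"
    from eventually_compose_filterlim[OF ev conjunct1[OF side_stepB[OF e']]]
    show "eventually (\<lambda>x. dexp \<beta> l x (0+1+k) = c) (side b y)"
      using bb by (simp add: side_def dexp_Suc)
  qed
next
  case (Suc m)
  show ?case
  proof (intro allI impI)
    fix y b
    assume h: "\<forall>j<Suc m. b = even j \<longrightarrow> negT \<beta> l ((negT \<beta> l ^^ j) y) \<noteq> l"
      and b: "b = even (Suc m)" and e: "negT \<beta> l ((negT \<beta> l ^^ Suc m) y) = l"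
    have s: "filterlim (negT \<beta> l) (side (\<not>b) (negT \<beta> l y)) (side b y)"
      using side_step[of b y] h[rule_format, of 0] by auto
    have h': "\<forall>j<m. (\<not>b) = even j \<longrightarrow> negT \<beta> l ((negT \<beta> l ^^ j) (negT \<beta> l y)) \<noteq> l"
    proof (intro allI impI)
      fix j assume "j < m" "(\<not>b) = even j"
      then show "negT \<beta> l ((negT \<beta> l ^^ j) (negT \<beta> l y)) \<noteq> l"
        using h[rule_format, of "Suc j"] Tj_Suc[of j y] by auto
    qed
    have b': "(\<not>b) = even m" using b by auto
    have e': "negT \<beta> l ((negT \<beta> l ^^ m) (negT \<beta> l y)) = l" using e Tj_Suc[of m y] by simp
    have IH: "eventually (\<lambda>x. dexp \<beta> l x m = dexp \<beta> l (negT \<beta> l y) m - 1) (side (\<not>b) (negT \<beta> l y)) \<and>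
     (\<forall>k c. eventually (\<lambda>z. dexp \<beta> l z k = c) (at_left (l+1)) \<longrightarrow>
        eventually (\<lambda>x. dexp \<beta> l x (m+1+k) = c) (side (\<not>b) (negT \<beta> l y)))"
      using Suc.IH h' b' e' by blast
    show "eventually (\<lambda>x. dexp \<beta> l x (Suc m) = dexp \<beta> l y (Suc m) - 1) (side b y) \<and>
     (\<forall>k c. eventually (\<lambda>z. dexp \<beta> l z k = c) (at_left (l+1)) \<longrightarrow>
        eventually (\<lambda>x. dexp \<beta> l x (Suc m+1+k) = c) (side b y))"
    proof (intro conjI allI impI)
      from eventually_compose_filterlim[OF conjunct1[OF IH] s]
      show "eventually (\<lambda>x. dexp \<beta> l x (Suc m) = dexp \<beta> l y (Suc m) - 1) (side b y)"
        by (simp add: dexp_Suc)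
      fix k c assume "eventually (\<lambda>z. dexp \<beta> l z k = c) (at_left (l+1))"
      with IH have "eventually (\<lambda>x. dexp \<beta> l x (m+1+k) = c) (side (\<not>b) (negT \<beta> l y))" by blast
      from eventually_compose_filterlim[OF this s]
      show "eventually (\<lambda>x. dexp \<beta> l x (Suc m+1+k) = c) (side b y)"
        by (simp add: dexp_Suc)
    qed
  qed
qed

end

theorem mainTheorem5:
  fixes \<beta> l :: real
  assumes "\<beta> > 1" and "-1 < l" and "l \<le> 0"
  shows "(((\<forall>q::nat. q \<ge> 1 \<longrightarrow> (negT \<beta> l ^^ q) l \<noteq> l)
            \<or> (\<forall>q::nat. q \<ge> 1 \<longrightarrow> (negT \<beta> l ^^ q) l = l \<longrightarrow> even q))
           \<longrightarrow> ((\<lambda>x. dexp \<beta> l x) \<longlongrightarrow> dexp \<beta> l l) (at_right l))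
    \<and> (\<forall>q::nat. q \<ge> 1 \<and> odd q \<and> (negT \<beta> l ^^ q) l = l
            \<and> (\<forall>p. 1 \<le> p \<and> p < q \<longrightarrow> (negT \<beta> l ^^ p) l \<noteq> l)
         \<longrightarrow> (\<exists>sr :: nat \<Rightarrow> int.
                ((\<lambda>x. dexp \<beta> l x) \<longlongrightarrow> sr) (at_left (l + 1))
              \<and> ((\<lambda>x. dexp \<beta> l x) \<longlongrightarrow>
                   (\<lambda>n. if n < q - 1 then dexp \<beta> l l n
                        else if n = q - 1 then dexp \<beta> l l n - 1
                        else sr (n - q))) (at_right l)))"
proof (intro conjI impI allI)
  have bpos: "\<beta> > 0" using assms by simp
  note G = lemG[OF bpos] and H = lemH[OF bpos] and E = lemE[OF bpos]
  {
    assume hyp: "(\<forall>q::nat. q \<ge> 1 \<longrightarrow> (negT \<beta> l ^^ q) l \<noteq> l)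
            \<or> (\<forall>q::nat. q \<ge> 1 \<longrightarrow> (negT \<beta> l ^^ q) l = l \<longrightarrow> even q)"
    show "((\<lambda>x. dexp \<beta> l x) \<longlongrightarrow> dexp \<beta> l l) (at_right l)"
    proof (rule comp_tendsto, rule tendsto_eventually)
      fix n
      have "\<forall>j\<le>n. True = even j \<longrightarrow> negT \<beta> l ((negT \<beta> l ^^ j) l) \<noteq> l"
      proof (intro allI impI)
        fix j assume "j \<le> n" "True = even j"
        then have "(negT \<beta> l ^^ Suc j) l \<noteq> l" using hyp by auto
        then show "negT \<beta> l ((negT \<beta> l ^^ j) l) \<noteq> l" by simp
      qed
      with G[where n=n and l=l, rule_format, where y=l and b=True] show "eventually (\<lambda>x. dexp \<beta> l x n = dexp \<beta> l l n) (at_right l)"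
        by (auto simp: side_def)
    qed
  }
  fix q :: nat
  assume hq: "q \<ge> 1 \<and> odd q \<and> (negT \<beta> l ^^ q) l = l
            \<and> (\<forall>p. 1 \<le> p \<and> p < q \<longrightarrow> (negT \<beta> l ^^ p) l \<noteq> l)"
  define sr where "sr n = (SOME c. eventually (\<lambda>x. dexp \<beta> l x n = c) (at_left (l+1)))" for n
  have srE: "eventually (\<lambda>x. dexp \<beta> l x n = sr n) (at_left (l+1))" for n
  proof -
    have "\<exists>c. eventually (\<lambda>x. dexp \<beta> l x n = c) (side False (l+1))"
      using E[where n=n and l=l] by blast
    then have "\<exists>c. eventually (\<lambda>x. dexp \<beta> l x n = c) (at_left (l+1))"
      by (simp add: side_def)
    then show ?thesis unfolding sr_def by (rule someI_ex)
  qed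
  have hj: "negT \<beta> l ((negT \<beta> l ^^ j) l) \<noteq> l" if "j < q - 1" for j
  proof -
    have "1 \<le> Suc j \<and> Suc j < q" using that by auto
    then have "(negT \<beta> l ^^ Suc j) l \<noteq> l" using hq by blast
    then show ?thesis by simp
  qed
  have Hq: "eventually (\<lambda>x. dexp \<beta> l x (q-1) = dexp \<beta> l l (q-1) - 1) (at_right l) \<and>
     (\<forall>k c. eventually (\<lambda>z. dexp \<beta> l z k = c) (at_left (l+1)) \<longrightarrow>
        eventually (\<lambda>x. dexp \<beta> l x (q-1+1+k) = c) (at_right l))"
  proof -
    have "\<forall>j<q-1. True = even j \<longrightarrow> negT \<beta> l ((negT \<beta> l ^^ j) l) \<noteq> l" using hj by blast
    moreover have "True = even (q-1)" using hq by simp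
    moreover have "negT \<beta> l ((negT \<beta> l ^^ (q-1)) l) = l"
    proof -
      have "Suc (q-1) = q" using hq by simp
      then show ?thesis using hq by (metis funpow.simps(2) o_apply)
    qed
    ultimately have "eventually (\<lambda>x. dexp \<beta> l x (q-1) = dexp \<beta> l l (q-1) - 1) (side True l) \<and>
     (\<forall>k c. eventually (\<lambda>z. dexp \<beta> l z k = c) (at_left (l+1)) \<longrightarrow>
        eventually (\<lambda>x. dexp \<beta> l x (q-1+1+k) = c) (side True l))"
      using spec[OF spec[OF H[where m="q-1" and l=l], of l], of True] by blast
    then show ?thesis unfolding side_def if_True .
  qed
  show "\<exists>sr :: nat \<Rightarrow> int.
                ((\<lambda>x. dexp \<beta> l x) \<longlongrightarrow> sr) (at_left (l + 1))
              \<and> ((\<lambda>x. dexp \<beta> l x) \<longlongrightarrow>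
                   (\<lambda>n. if n < q - 1 then dexp \<beta> l l n
                        else if n = q - 1 then dexp \<beta> l l n - 1
                        else sr (n - q))) (at_right l)"
  proof (intro exI conjI)
    show "((\<lambda>x. dexp \<beta> l x) \<longlongrightarrow> sr) (at_left (l + 1))"
      by (rule comp_tendsto, rule tendsto_eventually, rule srE)
    show "((\<lambda>x. dexp \<beta> l x) \<longlongrightarrow>
                   (\<lambda>n. if n < q - 1 then dexp \<beta> l l n
                        else if n = q - 1 then dexp \<beta> l l n - 1
                        else sr (n - q))) (at_right l)"
    proof (rule comp_tendsto, rule tendsto_eventually)
      fix n
      show "eventually (\<lambda>x. dexp \<beta> l x n = (if n < q - 1 then dexp \<beta> l l n
                        else if n = q - 1 then dexp \<beta> l l n - 1
                        else sr (n - q))) (at_right l)"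
      proof (cases "n < q - 1")
        case True
        have "\<forall>j\<le>n. True = even j \<longrightarrow> negT \<beta> l ((negT \<beta> l ^^ j) l) \<noteq> l"
          using hj True by auto
        with G[where n=n and l=l, rule_format, where y=l and b=True] True show ?thesis by (auto simp: side_def)
      next
        case False
        show ?thesis
        proof (cases "n = q - 1")
          case True
          then show ?thesis using conjunct1[OF Hq] by simp
        next
          case F2: False
          have nq: "n = q - 1 + 1 + (n - q)" using False F2 hq by auto
          have "eventually (\<lambda>x. dexp \<beta> l x (q-1+1+(n-q)) = sr (n-q)) (at_right l)"
            using conjunct2[OF Hq, rule_format, OF srE] .
          moreover have eq: "q-1+1+(n-q) = n" using nq by simp
          ultimately have "eventually (\<lambda>x. dexp \<beta> l x n = sr (n-q)) (at_right l)" by (simp only: eq)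
          then show ?thesis using False F2 by simp
        qed
      qed
    qed
  qed
qed

end
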